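(* Consider a training set of samples, each consisting of an ILP instance with bipartite representation $\mathcal{A}=\begin{bmatrix}\mathbf{A}&\mathbf{b}\\ \mathbf{c}^\top&0\end{bmatrix}$ ($\mathbf{A}\in\mathbb{R}^{m\times n}$), an augmented feature vector $\mathbf{z}\in\mathbb{R}^n$, and a label $\bar{\mathbf{x}}\in\mathbb{R}^n$; the model input is the augmented representation $\tilde{\mathcal{A}}=\begin{bmatrix}\mathbf{A}&\mathbf{b}\\ \mathbf{c}^\top&0\\ \mathbf{z}^\top&0\end{bmatrix}\in\mathbb{R}^{(m+2)\times(n+1)}$. Let $\ell\ge 0$ be a loss function that is permutation-invariant ($\ell(\pi^v(\mathbf{a}),\pi^v(\mathbf{b}))=\ell(\mathbf{a},\mathbf{b})$ for all $\pi\in S_n$) and has the identity property ($\ell(\mathbf{a},\mathbf{b})=0\iff \mathbf{a}=\mathbf{b}$). Suppose the augmented features violate isomorphic consistency, i.e., there are two samples $(\mathcal{A},\mathbf{z},\bar{\mathbf{x}})$ and $(\mathcal{A}',\mathbf{z}',\bar{\mathbf{x}}')$ and permutations $\pi\in S_n$, $\sigma\in S_m$ with $\pi^c(\sigma^r(\mathcal{A}))=\mathcal{A}'$ and $\pi^v(\mathbf{z})=\mathbf{z}'$ but $\pi^v(\bar{\mathbf{x}})\neq\bar{\mathbf{x}}'$. Then for every model $f_\theta$ mapping augmented representations to $\mathbb{R}^n$ that satisfies $f_\theta(\pi^c(\tilde{\mathcal{M}}))=\pi^v(f_\theta(\tilde{\mathcal{M}}))$ for all $\pi\in S_n$ and $f_\theta(\sigma^r(\tilde{\mathcal{M}}))=f_\theta(\tilde{\mathcal{M}})$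 for all $\sigma\in S_m$, the total training loss $\sum_{\text{samples}}\ell(f_\theta(\tilde{\mathcal{A}}),\bar{\mathbf{x}})$ is strictly positive; that is, the minimal loss cannot be $0$.
   Context: $S_n$ is the set of permutations of $\{1,\dots,n\}$. For $\pi\in S_n$: $\pi^v(\mathbf{y})=[y_{\pi(1)},\dots,y_{\pi(n)},y_{n+1},\dots]^\top$ permutes the top-most $n$ entries of a vector; $\pi^c(\mathbf{X})=[\mathbf{X}_{:,\pi(1)},\dots,\mathbf{X}_{:,\pi(n)},\mathbf{X}_{:,n+1},\dots]$ permutes the left-most $n$ columns of a matrix; for $\sigma\in S_m$, $\sigma^r(\mathbf{X})=[\mathbf{X}_{\sigma(1),:},\dots,\mathbf{X}_{\sigma(m),:},\mathbf{X}_{m+1,:},\dots]^\top$ permutes the top-most $m$ rows. The principle of isomorphic consistency requires: whenever two samples have instances with $\pi^c(\sigma^r(\mathcal{A}))=\mathcal{A}'$ for some $\pi\in S_n,\sigma\in S_m$, then $\pi^v(\mathbf{z})=\mathbf{z}'$ implies $\pi^v(\bar{\mathbf{x}})=\bar{\mathbf{x}}'$. *)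

theory Defs
  imports Complex_Main "HOL-Combinatorics.Permutations"
begin

text \<open>Vectors are functions nat => real (entry i is the (i+1)-th coordinate),
matrices are functions nat => nat => real (row index, column index), 0-indexed.
A permutation in S_n is a bijection permuting {..<n} and fixing everything else,
so the following are exactly the paper's operations on the top-most / left-most entries.\<close>

definition pv :: "(nat \<Rightarrow> nat) \<Rightarrow> (nat \<Rightarrow> real) \<Rightarrow> (nat \<Rightarrow> real)" where
  "pv \<pi> y = (\<lambda>i. y (\<pi> i))"

definition pc :: "(nat \<Rightarrow> nat) \<Rightarrow> (nat \<Rightarrow> nat \<Rightarrow> real) \<Rightarrow> (nat \<Rightarrow> nat \<Rightarrow> real)" where
  "pc \<pi> X = (\<lambda>i j. X i (\<pi> j))"

definition pr :: "(nat \<Rightarrow> nat) \<Rightarrow> (nat \<Rightarrow> nat \<Rightarrow> real) \<Rightarrow> (nat \<Rightarrow> nat \<Rightarrow> real)" where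
  "pr \<sigma> X = (\<lambda>i j. X (\<sigma> i) j)"

definition is_mat :: "nat \<Rightarrow> nat \<Rightarrow> (nat \<Rightarrow> nat \<Rightarrow> real) \<Rightarrow> bool" where
  "is_mat p q M \<longleftrightarrow> (\<forall>i j. (p \<le> i \<or> q \<le> j) \<longrightarrow> M i j = 0)"

definition bip :: "nat \<Rightarrow> nat \<Rightarrow> (nat \<Rightarrow> nat \<Rightarrow> real) \<Rightarrow> (nat \<Rightarrow> real) \<Rightarrow> (nat \<Rightarrow> real)
    \<Rightarrow> (nat \<Rightarrow> nat \<Rightarrow> real)" where
  "bip m n A b c = (\<lambda>i j.
     if i < m \<and> j < n then A i j
     else if i < m \<and> j = n then b i
     else if i = m \<and> j < n then c j
     else 0)"

definition aug :: "nat \<Rightarrow> nat \<Rightarrow> (nat \<Rightarrow> nat \<Rightarrow> real) \<Rightarrow> (nat \<Rightarrow> real) \<Rightarrow> (nat \<Rightarrow> real)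
    \<Rightarrow> (nat \<Rightarrow> real) \<Rightarrow> (nat \<Rightarrow> nat \<Rightarrow> real)" where
  "aug m n A b c z = (\<lambda>i j.
     if i < m \<and> j < n then A i j
     else if i < m \<and> j = n then b i
     else if i = m \<and> j < n then c j
     else if i = Suc m \<and> j < n then z j
     else 0)"

text \<open>A training sample: sizes m, n, ILP data A, b, c, augmented feature z, label x.\<close>
record sample =
  sm :: nat
  sn :: nat
  sA :: "nat \<Rightarrow> nat \<Rightarrow> real"
  sb :: "nat \<Rightarrow> real"
  sc :: "nat \<Rightarrow> real"
  sz :: "nat \<Rightarrow> real"
  sx :: "nat \<Rightarrow> real"

end

theory Submission
  imports Defs
begin

theorem proposition2:
  fixes S :: "sample list"
    and loss :: "nat \<Rightarrow> (nat \<Rightarrow> real) \<Rightarrow> (nat \<Rightarrow> real) \<Rightarrow> real"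
    and f :: "nat \<Rightarrow> nat \<Rightarrow> (nat \<Rightarrow> nat \<Rightarrow> real) \<Rightarrow> (nat \<Rightarrow> real)"
    and s s' :: sample and \<pi> \<sigma> :: "nat \<Rightarrow> nat"
  assumes loss_nonneg: "\<And>n a b. loss n a b \<ge> 0"
    and loss_perm: "\<And>n \<tau> a b. \<tau> permutes {..<n} \<Longrightarrow> loss n (pv \<tau> a) (pv \<tau> b) = loss n a b"
    and loss_id: "\<And>n a b. loss n a b = 0 \<longleftrightarrow> (\<forall>i<n. a i = b i)"
    and f_col: "\<And>m n M \<tau>. is_mat (m + 2) (n + 1) M \<Longrightarrow> \<tau> permutes {..<n} \<Longrightarrow>
                  \<forall>i<n. f m n (pc \<tau> M) i = pv \<tau> (f m n M) i"
    and f_row: "\<And>m n M \<tau>. is_mat (m + 2) (n + 1) M \<Longrightarrow> \<tau> permutes {..<m} \<Longrightarrow>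
                  \<forall>i<n. f m n (pr \<tau> M) i = f m n M i"
    and s_in: "s \<in> set S" and s'_in: "s' \<in> set S"
    and dims: "sm s' = sm s" "sn s' = sn s"
    and pi: "\<pi> permutes {..<sn s}" and sigma: "\<sigma> permutes {..<sm s}"
    and iso: "pc \<pi> (pr \<sigma> (bip (sm s) (sn s) (sA s) (sb s) (sc s)))
              = bip (sm s') (sn s') (sA s') (sb s') (sc s')"
    and feat: "\<forall>i<sn s. pv \<pi> (sz s) i = sz s' i"
    and label: "\<exists>i<sn s. pv \<pi> (sx s) i \<noteq> sx s' i"
  shows "(\<Sum>t\<leftarrow>S. loss (sn t) (f (sm t) (sn t) (aug (sm t) (sn t) (sA t) (sb t) (sc t) (sz t))) (sx t)) > 0"
proof -
  define m where "m = sm s"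
  define n where "n = sn s"
  define M where "M = aug m n (sA s) (sb s) (sc s) (sz s)"
  define M' where "M' = aug m n (sA s') (sb s') (sc s') (sz s')"
  have pim: "\<pi> permutes {..<n}" using pi n_def by simp
  have sgm: "\<sigma> permutes {..<m}" using sigma m_def by simp
  have pif: "\<pi> j = j" if "j \<ge> n" for j using permutes_not_in[OF pim] that by auto
  have sgf: "\<sigma> i = i" if "i \<ge> m" for i using permutes_not_in[OF sgm] that by auto
  have pil: "\<pi> j < n" if "j < n" for j using permutes_in_image[OF pim] that by auto
  have sgl: "\<sigma> i < m" if "i < m" for i using permutes_in_image[OF sgm] that by auto
  have isoij: "bip m n (sA s) (sb s) (sc s) (\<sigma> i) (\<pi> j) = bip m n (sA s') (sb s') (sc s') i j" for i j
    using fun_cong[OF fun_cong[OF iso, of i], of j] dims m_def n_def by (simp add: pc_def pr_def)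
  have feat': "sz s (\<pi> j) = sz s' j" if "j < n" for j using feat that n_def by (simp add: pv_def)
  have eq: "pc \<pi> (pr \<sigma> M) = M'"
  proof (intro ext)
    fix i j
    show "pc \<pi> (pr \<sigma> M) i j = M' i j"
    proof -
      consider "i < m" | "i = m" | "i = Suc m" | "i > Suc m" by linarith
      then show ?thesis
      proof cases
        case 1
        then show ?thesis using isoij[of i j] sgl[OF 1] pil pif[of j]
          by (cases "j < n"; cases "j = n") (auto simp: pc_def pr_def M_def M'_def aug_def bip_def)
      next
        case 2
        then show ?thesis using isoij[of i j] sgf[of i] pil pif[of j]
          by (cases "j < n"; cases "j = n") (auto simp: pc_def pr_def M_def M'_def aug_def bip_def)
      next
        case 3
        then show ?thesis using sgf[of i] pil pif[of j] feat'[of j]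
          by (cases "j < n") (auto simp: pc_def pr_def M_def M'_def aug_def)
      next
        case 4
        then show ?thesis using sgf[of i] pil pif[of j]
          by (cases "j < n") (auto simp: pc_def pr_def M_def M'_def aug_def)
      qed
    qed
  qed
  have matM: "is_mat (m + 2) (n + 1) M" by (auto simp: is_mat_def M_def aug_def)
  have matPM: "is_mat (m + 2) (n + 1) (pr \<sigma> M)"
    unfolding is_mat_def pr_def using matM sgf unfolding is_mat_def by auto
  have key: "f m n M' i = f m n M (\<pi> i)" if "i < n" for i
  proof -
    have "f m n M' i = pv \<pi> (f m n (pr \<sigma> M)) i" using f_col[OF matPM pim] eq that by auto
    also have "\<dots> = f m n (pr \<sigma> M) (\<pi> i)" by (simp add: pv_def)
    also have "\<dots> = f m n M (\<pi> i)" using f_row[OF matM sgm] pil that by auto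
    finally show ?thesis .
  qed
  let ?L = "map (\<lambda>t. loss (sn t) (f (sm t) (sn t) (aug (sm t) (sn t) (sA t) (sb t) (sc t) (sz t))) (sx t)) S"
  have nn: "\<And>x. x \<in> set ?L \<Longrightarrow> 0 \<le> x" using loss_nonneg by auto
  have ge: "sum_list ?L \<ge> 0" by (rule sum_list_nonneg) (use nn in auto)
  show ?thesis
  proof (rule ccontr)
    assume "\<not> ?thesis"
    then have "sum_list ?L = 0" using ge by simp
    then have all0: "\<forall>x\<in>set ?L. x = 0" using sum_list_nonneg_eq_0_iff[OF nn] by blast
    have l1: "loss n (f m n M) (sx s) = 0" using all0 s_in by (auto simp: m_def n_def M_def)
    have l2: "loss n (f m n M') (sx s') = 0" using all0 s'_in dims by (auto simp: m_def n_def M'_def)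
    from label obtain i where i: "i < n" "sx s (\<pi> i) \<noteq> sx s' i" by (auto simp: pv_def n_def)
    have "sx s' i = f m n M' i" using l2 i loss_id by auto
    also have "\<dots> = f m n M (\<pi> i)" using key i by simp
    also have "\<dots> = sx s (\<pi> i)" using l1 loss_id pil[OF i(1)] by auto
    finally show False using i by simp
  qed
qed

end
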